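(* Let $\mathcal G$ be a Lie superalgebra over a field of characteristic zero, with $\mathcal U_{1-}$, $\bullet$, the extended bracket $[\cdot,\cdot]$ and the notation $[A,k]$ as described below. Let $A,B\in\mathcal U_{1-}$ be homogeneous operators and $n\ge1$ an integer. Then $$[[A,B],n]=\sum_{k=0}^n\binom{n}{k}\big[[A,k],[B,n-k]\big]$$ and $$[A,n]\bullet B=\sum_{i+j=n-1}\big[[[A,i],B],j\big]+[A\bullet B,n]=\sum_{i+j=n-1}\binom{n}{j+1}\big[[A,i],[B,j]\big]+[A\bullet B,n],$$ where the sums run over all non-negative integers $i,j$ with $i+j=n-1$.
   Context: Set $\mathcal U_1=\mathcal G$ with its $\mathbb Z_2$-grading. For $p\ge1$ define recursively $\mathcal U_{-p+1}=\mathrm{Hom}(\mathcal U_1,\mathcal U_{-p+2})$, $\mathbb Z_2$-graded by declaring $A$ even (resp. odd) if it preserves (resp. reverses) parity; $|u|$ is the parity of a homogeneous element. Elements of $\mathcal U_{1-p}$ are operators of order $p$ (elements of $\mathcal G$ have order $0$); $\mathcal U_{1-}=\bigoplus_{p\ge0}\mathcal U_{1-p}$. Define $\circ$: $A\circ y=A(y)$, $y\circ A=0$ for $A$ of order $\ge1$, $y\in\mathcal U_1$; for $A,B$ of orders $\ge1$, recursively $(A\circ B)(x)=A\circ B(x)+(-1)^{|B||x|}A(x)\circ B$. Define $\bullet$: $A_p\bullet B_q=\frac{p!q!}{(p+q-1)!}A_p\circ B_q$ for orders $p,q\ge1$; $A_p\bullet x=pA_p(x)$, $x\bullet A_p=0$,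 $x\bullet y=0$ for $x,y\in\mathcal U_1$. The bracket of $\mathcal G$ extends to $\mathcal U_{1-}$: on $\mathcal G$ it is the given bracket, and for operators $A,B$ of orders $p,q$ with $p+q\ge1$, $[A,B]$ is the operator of order $p+q$ defined recursively by $[A,B]\bullet x=[A,B\bullet x]+(-1)^{|x||B|}[A\bullet x,B]$ for all $x\in\mathcal G$. $1$ denotes the identity map of $\mathcal G$ (an even operator of order $1$); for an operator $A$, $[A,0]=A$ and $[A,k]=[[A,k-1],1]$ for $k\ge1$. *)

theory Defs
  imports Complex_Main
begin

text \<open>The Lie superalgebra G is the whole type 'g, a vector space over the field 'k
  (scalar multiplication sc), Z2-graded as G = G0 (+) G1 (G0 even, G1 odd part),
  with bracket brG.  Parities are booleans: False = even, True = odd.\<close>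

definition gpart :: "'g set \<Rightarrow> 'g set \<Rightarrow> bool \<Rightarrow> 'g set" where
  "gpart G0 G1 a = (if a then G1 else G0)"

definition lie_superalgebra ::
  "('k::field_char_0 \<Rightarrow> 'g::ab_group_add \<Rightarrow> 'g) \<Rightarrow> 'g set \<Rightarrow> 'g set \<Rightarrow> ('g \<Rightarrow> 'g \<Rightarrow> 'g) \<Rightarrow> bool" where
  "lie_superalgebra sc G0 G1 brG \<longleftrightarrow>
     vector_space sc \<and>
     (\<forall>S\<in>{G0, G1}. 0 \<in> S \<and> (\<forall>x\<in>S. \<forall>y\<in>S. x + y \<in> S) \<and> (\<forall>c. \<forall>x\<in>S. sc c x \<in> S)) \<and>
     (\<forall>x. \<exists>a\<in>G0. \<exists>c\<in>G1. x = a + c) \<and> G0 \<inter> G1 = {0} \<and>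
     (\<forall>x. Vector_Spaces.linear sc sc (brG x)) \<and>
     (\<forall>y. Vector_Spaces.linear sc sc (\<lambda>x. brG x y)) \<and>
     (\<forall>a c x y. x \<in> gpart G0 G1 a \<longrightarrow> y \<in> gpart G0 G1 c \<longrightarrow>
        brG x y \<in> gpart G0 G1 (a \<noteq> c)) \<and>
     (\<forall>a c x y. x \<in> gpart G0 G1 a \<longrightarrow> y \<in> gpart G0 G1 c \<longrightarrow>
        brG x y = (if a \<and> c then brG y x else - brG y x)) \<and>
     (\<forall>a c x y z. x \<in> gpart G0 G1 a \<longrightarrow> y \<in> gpart G0 G1 c \<longrightarrow>
        brG x (brG y z) = brG (brG x y) z + (if a \<and> c then - brG y (brG x z) else brG y (brG x z)))"

text \<open>Projections onto the even and odd parts, and the sign twist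
  x \<mapsto> (-1)^(b|x|) x extended linearly.\<close>

definition pr0 :: "'g set \<Rightarrow> 'g set \<Rightarrow> 'g::ab_group_add \<Rightarrow> 'g" where
  "pr0 G0 G1 x = (THE a. a \<in> G0 \<and> x - a \<in> G1)"

definition pr1 :: "'g set \<Rightarrow> 'g set \<Rightarrow> 'g::ab_group_add \<Rightarrow> 'g" where
  "pr1 G0 G1 x = x - pr0 G0 G1 x"

definition sgnx :: "'g set \<Rightarrow> 'g set \<Rightarrow> bool \<Rightarrow> 'g::ab_group_add \<Rightarrow> 'g" where
  "sgnx G0 G1 b x = (if b then pr0 G0 G1 x - pr1 G0 G1 x else x)"

text \<open>An operator of order p (element of U_{1-p}, i.e. the curried
  Hom(G, Hom(G, ... Hom(G,G)))) is represented uncurried as a function on lists: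
  A(x1)(x2)...(xp) = f [x1,...,xp]; it is zero on lists of length different from p.
  An element y of G is the order-0 operator (elem y).\<close>

definition elem :: "'g::zero \<Rightarrow> 'g list \<Rightarrow> 'g" where
  "elem y = (\<lambda>xs. if xs = [] then y else 0)"

definition one_op :: "'g::zero list \<Rightarrow> 'g" where
  "one_op = (\<lambda>xs. case xs of [x] \<Rightarrow> x | _ \<Rightarrow> 0)"

definition is_hom_op ::
  "('k::field \<Rightarrow> 'g::ab_group_add \<Rightarrow> 'g) \<Rightarrow> 'g set \<Rightarrow> 'g set \<Rightarrow> nat \<Rightarrow> bool \<Rightarrow> ('g list \<Rightarrow> 'g) \<Rightarrow> bool" where
  "is_hom_op sc G0 G1 p b f \<longleftrightarrow>
     (\<forall>xs. length xs \<noteq> p \<longrightarrow> f xs = 0) \<and>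
     (\<forall>as bs. length as + length bs + 1 = p \<longrightarrow>
        Vector_Spaces.linear sc sc (\<lambda>x. f (as @ x # bs))) \<and>
     (\<forall>xs ps. length xs = p \<longrightarrow> length ps = p \<longrightarrow>
        (\<forall>i<p. xs ! i \<in> gpart G0 G1 (ps ! i)) \<longrightarrow>
        f xs \<in> gpart G0 G1 (foldr (\<lambda>a c. a \<noteq> c) ps b))"

text \<open>Composition A \<circ> B, A of order p, B of order q and parity b:
  A \<circ> y = A(y) for y in G; y \<circ> A = 0; for p, q \<ge> 1,
  (A \<circ> B)(x) = A \<circ> B(x) + (-1)^(|B||x|) A(x) \<circ> B (extended linearly in x).\<close>
fun comp_op ::
  "'g set \<Rightarrow> 'g set \<Rightarrow> nat \<Rightarrow> nat \<Rightarrow> bool \<Rightarrow> ('g::ab_group_add list \<Rightarrow> 'g) \<Rightarrow> ('g list \<Rightarrow> 'g) \<Rightarrow> 'g list \<Rightarrow> 'g" where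
  "comp_op G0 G1 p q b f g [] =
     (if p = 0 then 0 else if q = 0 then f [g []] else 0)"
| "comp_op G0 G1 p q b f g (x # xs) =
     (if p = 0 then 0 else if q = 0 then f (g [] # x # xs) else
        comp_op G0 G1 p (q - 1) b f (\<lambda>ys. g (pr0 G0 G1 x # ys)) xs
      + comp_op G0 G1 p (q - 1) (\<not> b) f (\<lambda>ys. g (pr1 G0 G1 x # ys)) xs
      + comp_op G0 G1 (p - 1) q b (\<lambda>ys. f (sgnx G0 G1 b x # ys)) g xs)"

text \<open>The product A_p \<bullet> B_q = p!q!/(p+q-1)! A_p \<circ> B_q (q = 0 gives A_p \<bullet> x = p A_p(x));
  x \<bullet> anything = 0.\<close>
definition dot_op ::
  "('k::field_char_0 \<Rightarrow> 'g::ab_group_add \<Rightarrow> 'g) \<Rightarrow> 'g set \<Rightarrow> 'g set \<Rightarrow> nat \<Rightarrow> nat \<Rightarrow> bool \<Rightarrow>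
     ('g list \<Rightarrow> 'g) \<Rightarrow> ('g list \<Rightarrow> 'g) \<Rightarrow> 'g list \<Rightarrow> 'g" where
  "dot_op sc G0 G1 p q b f g =
     (if p = 0 then (\<lambda>_. 0)
      else (\<lambda>xs. sc (fact p * fact q / fact (p + q - 1)) (comp_op G0 G1 p q b f g xs)))"

text \<open>The extended bracket [A,B], A of order p, B of order q and parity b.
  For p + q = 0 it is the bracket of G; for p + q \<ge> 1 it is determined by
  [A,B] \<bullet> x = [A, B \<bullet> x] + (-1)^(|x||B|) [A \<bullet> x, B], where [A,B] \<bullet> x = (p+q)[A,B](x).
  Terms B \<bullet> x with q = 0 and A \<bullet> x with p = 0 vanish and are omitted.\<close>
fun ext_br ::
  "('k::field_char_0 \<Rightarrow> 'g::ab_group_add \<Rightarrow> 'g) \<Rightarrow> 'g set \<Rightarrow> 'g set \<Rightarrow> ('g \<Rightarrow> 'g \<Rightarrow> 'g) \<Rightarrow>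
     nat \<Rightarrow> nat \<Rightarrow> bool \<Rightarrow> ('g list \<Rightarrow> 'g) \<Rightarrow> ('g list \<Rightarrow> 'g) \<Rightarrow> 'g list \<Rightarrow> 'g" where
  "ext_br sc G0 G1 brG p q b f g [] =
     (if p + q = 0 then brG (f []) (g []) else 0)"
| "ext_br sc G0 G1 brG p q b f g (x # xs) =
     (if p + q = 0 then 0 else
       sc (inverse (of_nat (p + q)))
        ((if q = 0 then 0 else
            ext_br sc G0 G1 brG p (q - 1) b f
              (dot_op sc G0 G1 q 0 False g (elem (pr0 G0 G1 x))) xs
          + ext_br sc G0 G1 brG p (q - 1) (\<not> b) f
              (dot_op sc G0 G1 q 0 False g (elem (pr1 G0 G1 x))) xs)
         + (if p = 0 then 0 else
            ext_br sc G0 G1 brG (p - 1) q b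
              (dot_op sc G0 G1 p 0 False f (elem (sgnx G0 G1 b x))) g xs)))"

text \<open>[A,k] for A of order p: [A,0] = A, [A,k] = [[A,k-1],1].\<close>
fun ad_one ::
  "('k::field_char_0 \<Rightarrow> 'g::ab_group_add \<Rightarrow> 'g) \<Rightarrow> 'g set \<Rightarrow> 'g set \<Rightarrow> ('g \<Rightarrow> 'g \<Rightarrow> 'g) \<Rightarrow>
     nat \<Rightarrow> ('g list \<Rightarrow> 'g) \<Rightarrow> nat \<Rightarrow> 'g list \<Rightarrow> 'g" where
  "ad_one sc G0 G1 brG p f 0 = f"
| "ad_one sc G0 G1 brG p f (Suc k) =
     ext_br sc G0 G1 brG (p + k) 1 False (ad_one sc G0 G1 brG p f k) one_op"

end

theory Submission
  imports Defs
begin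

locale LS =
  fixes sc :: "'k::field_char_0 \<Rightarrow> 'g::ab_group_add \<Rightarrow> 'g"
    and G0 G1 :: "'g set" and brG :: "'g \<Rightarrow> 'g \<Rightarrow> 'g"
  assumes LSA: "lie_superalgebra sc G0 G1 brG"
begin

sublocale V: vector_space sc using LSA by (simp add: lie_superalgebra_def)

abbreviation "gp \<equiv> gpart G0 G1"
abbreviation "p0 \<equiv> pr0 G0 G1"
abbreviation "p1 \<equiv> pr1 G0 G1"
abbreviation "sx \<equiv> sgnx G0 G1"

lemma G0_0: "0 \<in> G0" and G1_0: "0 \<in> G1"
  and G0_add: "x \<in> G0 \<Longrightarrow> y \<in> G0 \<Longrightarrow> x + y \<in> G0"
  and G1_add: "x \<in> G1 \<Longrightarrow> y \<in> G1 \<Longrightarrow> x + y \<in> G1"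
  and G0_sc: "x \<in> G0 \<Longrightarrow> sc c x \<in> G0"
  and G1_sc: "x \<in> G1 \<Longrightarrow> sc c x \<in> G1"
  and G_dec: "\<exists>a\<in>G0. \<exists>c\<in>G1. z = a + c"
  and G_int: "G0 \<inter> G1 = {0}"
  using LSA unfolding lie_superalgebra_def by auto

lemma gp_0[simp]: "0 \<in> gp c" by (simp add: gpart_def G0_0 G1_0)
lemma gp_add: "x \<in> gp c \<Longrightarrow> y \<in> gp c \<Longrightarrow> x + y \<in> gp c"
  by (auto simp: gpart_def G0_add G1_add split: if_splits)
lemma gp_sc: "x \<in> gp c \<Longrightarrow> sc a x \<in> gp c"
  by (auto simp: gpart_def G0_sc G1_sc split: if_splits)
lemma gp_neg: "x \<in> gp c \<Longrightarrow> - x \<in> gp c"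
  using gp_sc[of x c "-1"] by simp
lemma gp_diff: "x \<in> gp c \<Longrightarrow> y \<in> gp c \<Longrightarrow> x - y \<in> gp c"
  using gp_add[of x c "-y"] gp_neg by simp
lemma gp_both: "x \<in> gp c \<Longrightarrow> x \<in> gp (\<not> c) \<Longrightarrow> x = 0"
  using G_int by (auto simp: gpart_def split: if_splits)

lemma br_lin: "Vector_Spaces.linear sc sc (brG x)" and br_linl: "Vector_Spaces.linear sc sc (\<lambda>y. brG y x)"
  using LSA unfolding lie_superalgebra_def by auto

lemma br_add_r: "brG x (y + z) = brG x y + brG x z"
  using br_lin[of x] by (simp add: linear_iff_module_hom module_hom_iff)
lemma br_add_l: "brG (y + z) x = brG y x + brG z x"
  using br_linl[of x] by (simp add: linear_iff_module_hom module_hom_iff)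
lemma br_sc_r: "brG x (sc c y) = sc c (brG x y)"
  using br_lin[of x] by (simp add: linear_iff_module_hom module_hom_iff)
lemma br_sc_l: "brG (sc c y) x = sc c (brG y x)"
  using br_linl[of x] by (simp add: linear_iff_module_hom module_hom_iff)
lemma br_0_r[simp]: "brG x 0 = 0" using br_sc_r[of x 0 0] by simp
lemma br_0_l[simp]: "brG 0 x = 0" using br_sc_l[of 0 0 x] by simp
lemma br_neg_r: "brG x (- y) = - brG x y" using br_sc_r[of x "-1" y] by simp
lemma br_neg_l: "brG (- y) x = - brG y x" using br_sc_l[of "-1" y x] by simp

lemma br_par: "x \<in> gp a \<Longrightarrow> y \<in> gp c \<Longrightarrow> brG x y \<in> gp (a \<noteq> c)"
  using LSA unfolding lie_superalgebra_def by blast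
lemma br_anti: "x \<in> gp a \<Longrightarrow> y \<in> gp c \<Longrightarrow> brG x y = (if a \<and> c then brG y x else - brG y x)"
  using LSA unfolding lie_superalgebra_def by blast
lemma br_jac: "x \<in> gp a \<Longrightarrow> y \<in> gp c \<Longrightarrow>
        brG x (brG y z) = brG (brG x y) z + (if a \<and> c then - brG y (brG x z) else brG y (brG x z))"
  using LSA unfolding lie_superalgebra_def by blast

definition sg :: "bool \<Rightarrow> 'g \<Rightarrow> 'g" where "sg t v = (if t then - v else v)"
lemma sg_simps[simp]: "sg False v = v" "sg True v = - v" "sg t 0 = 0" "sg t (sg t v) = v"
  by (auto simp: sg_def)

lemma J0_hom:
  assumes a: "a \<in> gp d" and y: "y \<in> gp b" and z: "z \<in> gp c"
  shows "brG (brG a y) z = brG a (brG y z) + sg (b \<and> c) (brG (brG a z) y)"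
proof -
  have az: "brG a z \<in> gp (d \<noteq> c)" using br_par[OF a z] .
  have j: "brG a (brG y z) = brG (brG a y) z + (if d \<and> b then - brG y (brG a z) else brG y (brG a z))"
    using br_jac[OF a y] .
  have an: "brG (brG a z) y = (if (d \<noteq> c) \<and> b then brG y (brG a z) else - brG y (brG a z))"
    using br_anti[OF az y] .
  show ?thesis using j an by (cases b; cases c; cases d) (auto simp: sg_def algebra_simps)
qed

lemma gp_cases: "x \<in> gp False \<Longrightarrow> x \<in> G0" "x \<in> gp True \<Longrightarrow> x \<in> G1"
   "x \<in> G0 \<Longrightarrow> x \<in> gp False" "x \<in> G1 \<Longrightarrow> x \<in> gp True"
  by (auto simp: gpart_def)

lemma J0:
  assumes y: "y \<in> gp b" and z: "z \<in> gp c"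
  shows "brG (brG a y) z = brG a (brG y z) + sg (b \<and> c) (brG (brG a z) y)"
proof -
  obtain a0 a1 where a0: "a0 \<in> G0" and a1: "a1 \<in> G1" and aa: "a = a0 + a1" using G_dec by blast
  have h0: "brG (brG a0 y) z = brG a0 (brG y z) + sg (b \<and> c) (brG (brG a0 z) y)"
    by (rule J0_hom[OF gp_cases(3)[OF a0] y z])
  have h1: "brG (brG a1 y) z = brG a1 (brG y z) + sg (b \<and> c) (brG (brG a1 z) y)"
    by (rule J0_hom[OF gp_cases(4)[OF a1] y z])
  show ?thesis unfolding aa using h0 h1 by (simp add: br_add_l sg_def algebra_simps)
qed

lemma G_neg: "x \<in> G0 \<Longrightarrow> -x \<in> G0" "x \<in> G1 \<Longrightarrow> -x \<in> G1"
  using G0_sc[of x "-1"] G1_sc[of x "-1"] by auto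
lemma G_diff: "x \<in> G0 \<Longrightarrow> y \<in> G0 \<Longrightarrow> x - y \<in> G0" "x \<in> G1 \<Longrightarrow> y \<in> G1 \<Longrightarrow> x - y \<in> G1"
  using G0_add[of x "-y"] G1_add[of x "-y"] G_neg by auto

lemma pr0_unique: assumes "a \<in> G0" "x - a \<in> G1" shows "p0 x = a"
proof -
  have "\<And>a'. a' \<in> G0 \<Longrightarrow> x - a' \<in> G1 \<Longrightarrow> a' = a"
  proof -
    fix a' assume h: "a' \<in> G0" "x - a' \<in> G1"
    have "a - a' \<in> G0" using G_diff(1)[OF assms(1) h(1)] .
    moreover have "a - a' = (x - a') - (x - a)" by simp
    hence "a - a' \<in> G1" using G_diff(2)[OF h(2) assms(2)] by simp
    ultimately have "a - a' \<in> G0 \<inter> G1" by blast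
    hence "a - a' = 0" using G_int by blast
    thus "a' = a" by simp
  qed
  thus ?thesis unfolding pr0_def using assms by (intro the_equality) blast+
qed

lemma pr0_G0: "p0 x \<in> G0" and pr1_G1: "p1 x \<in> G1"
proof -
  obtain a c where "a \<in> G0" "c \<in> G1" "x = a + c" using G_dec by blast
  hence "p0 x = a" by (intro pr0_unique) auto
  thus "p0 x \<in> G0" "p1 x \<in> G1" using \<open>a \<in> G0\<close> \<open>c \<in> G1\<close> \<open>x = a + c\<close> by (auto simp: pr1_def)
qed

lemma pr_sum: "p0 x + p1 x = x" by (simp add: pr1_def)

lemma pr0_of_G0[simp]: "x \<in> G0 \<Longrightarrow> p0 x = x" by (rule pr0_unique) (auto simp: G1_0)
lemma pr1_of_G0[simp]: "x \<in> G0 \<Longrightarrow> p1 x = 0" by (simp add: pr1_def)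
lemma pr0_of_G1[simp]: "x \<in> G1 \<Longrightarrow> p0 x = 0" by (rule pr0_unique) (auto simp: G0_0)
lemma pr1_of_G1[simp]: "x \<in> G1 \<Longrightarrow> p1 x = x" by (simp add: pr1_def)

lemma pr0_add: "p0 (x + y) = p0 x + p0 y"
proof (rule pr0_unique)
  show "p0 x + p0 y \<in> G0" using G0_add[OF pr0_G0 pr0_G0] .
  have "x + y - (p0 x + p0 y) = p1 x + p1 y" by (simp add: pr1_def)
  thus "x + y - (p0 x + p0 y) \<in> G1" using G1_add[OF pr1_G1 pr1_G1] by simp
qed
lemma pr1_add: "p1 (x + y) = p1 x + p1 y" by (simp add: pr1_def pr0_add)
lemma pr0_sc: "p0 (sc c x) = sc c (p0 x)"
proof (rule pr0_unique)
  show "sc c (p0 x) \<in> G0" by (rule G0_sc[OF pr0_G0])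
  have "sc c x - sc c (p0 x) = sc c (p1 x)" by (simp add: pr1_def V.scale_right_diff_distrib)
  thus "sc c x - sc c (p0 x) \<in> G1" using G1_sc[OF pr1_G1] by simp
qed
lemma pr1_sc: "p1 (sc c x) = sc c (p1 x)" by (simp add: pr1_def pr0_sc V.scale_right_diff_distrib)
lemma pr0_neg: "p0 (- x) = - p0 x" using pr0_sc[of "-1" x] by simp
lemma pr1_neg: "p1 (- x) = - p1 x" using pr1_sc[of "-1" x] by simp
lemma pr0_0[simp]: "p0 0 = 0" using pr0_of_G0[OF G0_0] .
lemma pr1_0[simp]: "p1 0 = 0" using pr1_of_G0[OF G0_0] .

lemma pr0_pr0[simp]: "p0 (p0 x) = p0 x" using pr0_G0 by simp
lemma pr1_pr0[simp]: "p1 (p0 x) = 0" using pr0_G0 by simp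
lemma pr0_pr1[simp]: "p0 (p1 x) = 0" using pr1_G1 by simp
lemma pr1_pr1[simp]: "p1 (p1 x) = p1 x" using pr1_G1 by simp

lemma pr0_diff: "p0 (x - y) = p0 x - p0 y"
  by (simp only: diff_conv_add_uminus pr0_add pr0_neg)
lemma pr1_diff: "p1 (x - y) = p1 x - p1 y"
  by (simp only: diff_conv_add_uminus pr1_add pr1_neg)
lemma sx_False[simp]: "sx False x = x" by (simp add: sgnx_def)
lemma sx_True: "sx True x = p0 x - p1 x" by (simp add: sgnx_def)
lemma pr0_sx[simp]: "p0 (sx b x) = p0 x"
  by (cases b) (simp_all only: sx_False sx_True pr0_diff pr0_pr0 pr0_pr1 diff_zero)
lemma pr1_sx: "p1 (sx b x) = sg b (p1 x)"
  by (cases b) (simp_all only: sx_False sx_True pr1_diff pr1_pr0 pr1_pr1 sg_def if_True if_False diff_0)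
lemma sx_sx: "sx b (sx c x) = sx (b \<noteq> c) x"
  apply (cases b; cases c)
  apply (simp_all only: sx_False sx_True pr1_diff pr1_pr0 pr1_pr1 pr0_diff pr0_pr0 pr0_pr1 simp_thms)
  apply (simp_all add: pr1_def)
  done
lemma sx_pr0[simp]: "sx b (p0 x) = p0 x" by (cases b) (simp_all add: sx_True)
lemma sx_pr1: "sx b (p1 x) = sg b (p1 x)" by (cases b) (simp_all add: sx_True sg_def)
lemma sx_hom: "w \<in> gp c \<Longrightarrow> sx b w = sg (b \<and> c) w"
  by (cases c; cases b) (auto simp: sx_True sg_def gpart_def)
lemma sx_0[simp]: "sx b 0 = 0" by (cases b) (simp_all add: sx_True)

abbreviation "E \<equiv> ext_br sc G0 G1 brG"
abbreviation "dot \<equiv> dot_op sc G0 G1"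
abbreviation "cmp \<equiv> comp_op G0 G1"
abbreviation "ad \<equiv> ad_one sc G0 G1 brG"

definition Dx :: "nat \<Rightarrow> 'g \<Rightarrow> ('g list \<Rightarrow> 'g) \<Rightarrow> 'g list \<Rightarrow> 'g" where
  "Dx p y f = (\<lambda>ys. sc (of_nat p) (f (y # ys)))"

lemma Dx_0[simp]: "Dx 0 y f = (\<lambda>_. 0)" by (simp add: Dx_def)
lemma Dx_zero[simp]: "Dx p y (\<lambda>_. 0) = (\<lambda>_. 0)" by (simp add: Dx_def)
lemma elem_Nil[simp]: "elem y [] = y" by (simp add: elem_def)
lemma elem_Cons[simp]: "elem y (x # xs) = 0" by (simp add: elem_def)
lemma elem_zero[simp]: "elem 0 = (\<lambda>_. 0)" by (simp add: elem_def fun_eq_iff)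

lemma comp_q0: "cmp p 0 b f g xs = (if p = 0 then 0 else f (g [] # xs))"
  by (cases xs) simp_all
lemma comp_p0[simp]: "cmp 0 q b f g xs = 0"
  by (cases xs) simp_all

lemma dot_p0[simp]: "dot 0 q b f g = (\<lambda>_. 0)" by (simp add: dot_op_def)

lemma fact_quot: "p > 0 \<Longrightarrow> (fact p * fact 0 / fact (p - 1) :: 'k) = of_nat p"
  by (simp add: fact_reduce[of p])

lemma dot_q0: "dot p 0 b f g = Dx p (g []) f"
proof (cases "p = 0")
  case True thus ?thesis by simp
next
  case False
  thus ?thesis unfolding dot_op_def Dx_def using fact_quot[of p]
    by (simp add: comp_q0 fun_eq_iff)
qed


end
context LS begin

lemma E_Nil: "E p q b f g [] = (if p + q = 0 then brG (f []) (g []) else 0)" by simp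

lemma E_zero_g[simp]: "E p q b f (\<lambda>_. 0) xs = 0"
  by (induction xs arbitrary: p q b f) (simp_all add: dot_q0)

lemma E_zero_f[simp]: "E p q b (\<lambda>_. 0) g xs = 0"
  by (induction xs arbitrary: p q b g) (simp_all add: dot_q0)

lemma E_Cons: "E p q b f g (x # xs) = (if p + q = 0 then 0 else
   sc (inverse (of_nat (p+q))) (E p (q-1) b f (Dx q (p0 x) g) xs + E p (q-1) (\<not> b) f (Dx q (p1 x) g) xs
      + E (p-1) q b (Dx p (sx b x) f) g xs))"
  by (simp add: dot_q0)

declare ext_br.simps(2)[simp del]

lemma Dx_add_f: "Dx p y (\<lambda>ys. f1 ys + f2 ys) = (\<lambda>ys. Dx p y f1 ys + Dx p y f2 ys)"
  by (simp add: Dx_def V.scale_right_distrib)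
lemma Dx_sc_f: "Dx p y (\<lambda>ys. sc c (f ys)) = (\<lambda>ys. sc c (Dx p y f ys))"
  by (simp add: Dx_def mult.commute)

lemma add6_lem: "sc i (a1+a2 + (b1+b2) + (c1+c2)) = sc i (a1+b1+c1) + sc i (a2+b2+c2)"
  by (simp only: V.scale_right_distrib[symmetric]) (simp add: ac_simps)

lemma E_add_f: "E p q b (\<lambda>ys. f1 ys + f2 ys) g xs = E p q b f1 g xs + E p q b f2 g xs"
proof (induction xs arbitrary: p q b f1 f2 g)
  case Nil thus ?case by (simp add: br_add_l)
next
  case (Cons x xs) thus ?case
    by (simp add: E_Cons Dx_add_f add6_lem)
qed

lemma E_add_g: "E p q b f (\<lambda>ys. g1 ys + g2 ys) xs = E p q b f g1 xs + E p q b f g2 xs"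
proof (induction xs arbitrary: p q b f g1 g2)
  case Nil thus ?case by (simp add: br_add_r)
next
  case (Cons x xs) thus ?case
    by (simp add: E_Cons Dx_add_f add6_lem)
qed

lemma E_sc_f: "E p q b (\<lambda>ys. sc c (f ys)) g xs = sc c (E p q b f g xs)"
proof (induction xs arbitrary: p q b f g)
  case Nil thus ?case by (simp add: br_sc_l)
next
  case (Cons x xs) thus ?case
    by (simp add: E_Cons Dx_sc_f V.scale_right_distrib mult.commute)
qed

lemma E_sc_g: "E p q b f (\<lambda>ys. sc c (g ys)) xs = sc c (E p q b f g xs)"
proof (induction xs arbitrary: p q b f g)
  case Nil thus ?case by (simp add: br_sc_r)
next
  case (Cons x xs) thus ?case
    by (simp add: E_Cons Dx_sc_f V.scale_right_distrib mult.commute)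
qed

lemma E_neg_f: "E p q b (\<lambda>ys. - f ys) g xs = - E p q b f g xs"
  using E_sc_f[of p q b "-1" f g xs] by simp
lemma E_neg_g: "E p q b f (\<lambda>ys. - g ys) xs = - E p q b f g xs"
  using E_sc_g[of p q b f "-1" g xs] by simp

lemma E_sum_f: "finite K \<Longrightarrow> E p q b (\<lambda>ys. \<Sum>k\<in>K. h k ys) g xs = (\<Sum>k\<in>K. E p q b (h k) g xs)"
proof (induction K rule: finite_induct)
  case empty thus ?case by simp
next
  case (insert k K) thus ?case by (simp add: E_add_f)
qed

lemma E_sum3_f: "E p q b (\<lambda>ys. f1 ys + f2 ys + f3 ys) g xs = E p q b f1 g xs + E p q b f2 g xs + E p q b f3 g xs"
  by (simp add: E_add_f)
lemma E_sum3_g: "E p q b f (\<lambda>ys. g1 ys + g2 ys + g3 ys) xs = E p q b f g1 xs + E p q b f g2 xs + E p q b f g3 xs"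
  by (simp add: E_add_g)

lemma DE: "Dx (p+q) y (E p q b f g) = (\<lambda>ys. E p (q-1) b f (Dx q (p0 y) g) ys
   + E p (q-1) (\<not> b) f (Dx q (p1 y) g) ys + E (p-1) q b (Dx p (sx b y) f) g ys)"
proof (cases "p + q = 0")
  case True thus ?thesis by (simp add: fun_eq_iff)
next
  case False
  hence "(of_nat p + of_nat q :: 'k) \<noteq> 0" by (metis of_nat_add of_nat_eq_0_iff)
  thus ?thesis by (simp add: Dx_def E_Cons fun_eq_iff)
qed

definition mlin :: "('g list \<Rightarrow> 'g) \<Rightarrow> bool" where
  "mlin f \<longleftrightarrow> (\<forall>as bs x y. f (as @ (x + y) # bs) = f (as @ x # bs) + f (as @ y # bs)) \<and>
            (\<forall>as bs c x. f (as @ sc c x # bs) = sc c (f (as @ x # bs)))"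

lemma mlin_add: "mlin f \<Longrightarrow> f (as @ (x + y) # bs) = f (as @ x # bs) + f (as @ y # bs)"
  by (simp add: mlin_def)
lemma mlin_sc: "mlin f \<Longrightarrow> f (as @ sc c x # bs) = sc c (f (as @ x # bs))"
  by (simp add: mlin_def)
lemma mlin_hd_add: "mlin f \<Longrightarrow> f ((x + y) # bs) = f (x # bs) + f (y # bs)"
  using mlin_add[of f "[]"] by simp
lemma mlin_hd_sc: "mlin f \<Longrightarrow> f (sc c x # bs) = sc c (f (x # bs))"
  using mlin_sc[of f "[]"] by simp
lemma mlin_hd_neg: "mlin f \<Longrightarrow> f (- x # bs) = - f (x # bs)"
  using mlin_hd_sc[of f "-1" x bs] by simp
lemma mlin_hd_0: "mlin f \<Longrightarrow> f (0 # bs) = 0"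
  using mlin_hd_sc[of f 0 0 bs] by simp

lemma mlin_cons: "mlin f \<Longrightarrow> mlin (\<lambda>ys. f (w # ys))"
proof -
  assume m: "mlin f"
  show ?thesis unfolding mlin_def using mlin_add[OF m, of "w # as" for as] mlin_sc[OF m, of "w # as" for as] by simp
qed
lemma mlin_Dx[simp]: "mlin f \<Longrightarrow> mlin (Dx p y f)"
proof -
  assume m: "mlin f"
  have a: "f (y # as @ (x + z) # bs) = f (y # as @ x # bs) + f (y # as @ z # bs)" for as bs x z
    using mlin_add[OF m, of "y # as"] by simp
  have b: "f (y # as @ sc c x # bs) = sc c (f (y # as @ x # bs))" for as bs c x
    using mlin_sc[OF m, of "y # as"] by simp
  show ?thesis unfolding mlin_def Dx_def by (simp add: a b V.scale_right_distrib mult.commute)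
qed
lemma mlin_zero[simp]: "mlin (\<lambda>_. 0)" by (simp add: mlin_def)
lemma mlin_elem[simp]: "mlin (elem z)" by (simp add: mlin_def elem_def)
lemma mlin_one[simp]: "mlin one_op"
  unfolding mlin_def one_op_def
  by (auto split: list.splits simp: Cons_eq_append_conv append_eq_Cons_conv)

lemma Dx_add_y: "mlin f \<Longrightarrow> Dx p (y1 + y2) f = (\<lambda>ys. Dx p y1 f ys + Dx p y2 f ys)"
  by (simp add: Dx_def mlin_hd_add V.scale_right_distrib)
lemma Dx_sc_y: "mlin f \<Longrightarrow> Dx p (sc c y) f = (\<lambda>ys. sc c (Dx p y f ys))"
  by (simp add: Dx_def mlin_hd_sc mult.commute)
lemma Dx_neg_y: "mlin f \<Longrightarrow> Dx p (- y) f = (\<lambda>ys. - Dx p y f ys)"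
  by (simp add: Dx_def mlin_hd_neg)
lemma Dx_0_y: "mlin f \<Longrightarrow> Dx p 0 f = (\<lambda>_. 0)"
  by (simp add: Dx_def mlin_hd_0)
lemma Dx_sg_y: "mlin f \<Longrightarrow> Dx p (sg t y) f = (\<lambda>ys. sg t (Dx p y f ys))"
  by (cases t) (simp_all add: Dx_neg_y)

lemma sx_G0: "x \<in> G0 \<Longrightarrow> sx b x = x" by (cases b) (simp_all add: sx_True)
lemma sx_G1: "x \<in> G1 \<Longrightarrow> sx b x = sg b x" by (cases b) (simp_all add: sx_True)

lemma sx_add: "sx b (x + y) = sx b x + sx b y"
  by (cases b) (simp_all add: sx_True pr0_add pr1_add)
lemma sx_sc: "sx b (sc c x) = sc c (sx b x)"
  by (cases b) (simp_all add: sx_True pr0_sc pr1_sc V.scale_right_diff_distrib)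

lemma sc6_lem: "sc i (sc c a + sc c b + sc c d) = sc c (sc i (a + b + d))"
  by (simp add: V.scale_right_distrib mult.commute)

lemma E_addx: "mlin f \<Longrightarrow> mlin g \<Longrightarrow>
  E p q b f g (as @ (x + y) # bs) = E p q b f g (as @ x # bs) + E p q b f g (as @ y # bs)"
proof (induction as arbitrary: p q b f g)
  case Nil thus ?case
    by (simp add: E_Cons pr0_add pr1_add sx_add Dx_add_y E_add_f E_add_g add6_lem)
next
  case (Cons a as) thus ?case
    by (simp add: E_Cons add6_lem)
qed

lemma E_scx: "mlin f \<Longrightarrow> mlin g \<Longrightarrow>
  E p q b f g (as @ sc c x # bs) = sc c (E p q b f g (as @ x # bs))"
proof (induction as arbitrary: p q b f g)
  case Nil thus ?case
    by (simp add: E_Cons pr0_sc pr1_sc sx_sc Dx_sc_y E_sc_f E_sc_g sc6_lem)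
next
  case (Cons a as) thus ?case
    by (simp add: E_Cons sc6_lem)
qed

lemma mlin_E[simp]: "mlin f \<Longrightarrow> mlin g \<Longrightarrow> mlin (E p q b f g)"
  unfolding mlin_def[of "E p q b f g"] by (simp add: E_addx E_scx)

definition par :: "bool \<Rightarrow> ('g list \<Rightarrow> 'g) \<Rightarrow> bool" where
  "par b g \<longleftrightarrow> (\<forall>xs ps. list_all2 (\<lambda>x c. x \<in> gp c) xs ps \<longrightarrow> g xs \<in> gp (foldr (\<lambda>a c. a \<noteq> c) ps b))"

lemma foldr_xr: "foldr (\<lambda>a c. a \<noteq> c) ps (b \<noteq> c) = (c \<noteq> foldr (\<lambda>a c. a \<noteq> c) ps b)"
  by (induction ps) auto

lemma par_Nil: "par b g \<Longrightarrow> g [] \<in> gp b"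
  unfolding par_def by (metis foldr_Nil id_apply list.rel_intros(1))

lemma par_Dx: "par b g \<Longrightarrow> w \<in> gp c \<Longrightarrow> par (b \<noteq> c) (Dx q w g)"
  unfolding par_def Dx_def
proof (intro allI impI)
  fix xs ps assume pg: "\<forall>xs ps. list_all2 (\<lambda>x c. x \<in> gp c) xs ps \<longrightarrow> g xs \<in> gp (foldr (\<lambda>a c. a \<noteq> c) ps b)"
    and w: "w \<in> gp c" and l: "list_all2 (\<lambda>x c. x \<in> gp c) xs ps"
  have "list_all2 (\<lambda>x c. x \<in> gp c) (w # xs) (c # ps)" using w l by simp
  hence "g (w # xs) \<in> gp (foldr (\<lambda>a c. a \<noteq> c) (c # ps) b)" using pg by blast
  moreover have "foldr (\<lambda>a c. a \<noteq> c) (c # ps) b = foldr (\<lambda>a c. a \<noteq> c) ps (b \<noteq> c)"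
    using foldr_xr[of ps b c] by simp
  ultimately have "g (w # xs) \<in> gp (foldr (\<lambda>a c. a \<noteq> c) ps (b \<noteq> c))" by simp
  thus "sc (of_nat q) (g (w # xs)) \<in> gp (foldr (\<lambda>a c. a \<noteq> c) ps (b \<noteq> c))" by (rule gp_sc)
qed

lemma par_zero[simp]: "par b (\<lambda>_. 0)" by (simp add: par_def)

lemma par_elem: "z \<in> gp c \<Longrightarrow> par c (elem z)"
  unfolding par_def by (auto simp: elem_def)

lemma par_one: "par False one_op"
  unfolding par_def one_op_def
  by (auto split: list.splits simp: list_all2_Cons1)

lemma par_E_aux: "mlin g \<Longrightarrow> par a f \<Longrightarrow> par b g \<Longrightarrow> list_all2 (\<lambda>x c. x \<in> gp c) xs ps \<Longrightarrow>
   E p q b f g xs \<in> gp (foldr (\<lambda>a c. a \<noteq> c) ps (a \<noteq> b))"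
proof (induction xs arbitrary: ps p q b f g a)
  case Nil
  hence "ps = []" by simp
  thus ?case using Nil br_par[OF par_Nil[OF Nil(2)] par_Nil[OF Nil(3)]] by simp
next
  case (Cons x xs)
  then obtain c ps' where ps: "ps = c # ps'" and x: "x \<in> gp c" and l: "list_all2 (\<lambda>x c. x \<in> gp c) xs ps'"
    by (auto simp: list_all2_Cons1)
  show ?case
  proof (cases c)
    case False
    hence x0: "x \<in> G0" using x by (simp add: gpart_def)
    have t1': "E p (q-1) (b \<noteq> c) f (Dx q x g) xs \<in> gp (foldr (\<lambda>a c. a \<noteq> c) ps' (a \<noteq> (b \<noteq> c)))"
      by (rule Cons.IH[OF mlin_Dx[OF Cons(2)] Cons(3) par_Dx[OF Cons(4) x] l])
    have t1: "E p (q-1) b f (Dx q x g) xs \<in> gp (foldr (\<lambda>a c. a \<noteq> c) ps' (a \<noteq> b))"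
      using t1' False by simp
    have t3': "E (p-1) q b (Dx p x f) g xs \<in> gp (foldr (\<lambda>a c. a \<noteq> c) ps' ((a \<noteq> c) \<noteq> b))"
      by (rule Cons.IH[OF Cons(2) par_Dx[OF Cons(3) x] Cons(4) l])
    have t3: "E (p-1) q b (Dx p x f) g xs \<in> gp (foldr (\<lambda>a c. a \<noteq> c) ps' (a \<noteq> b))"
      using t3' False by simp
    have tgt: "foldr (\<lambda>a c. a \<noteq> c) ps (a \<noteq> b) = foldr (\<lambda>a c. a \<noteq> c) ps' (a \<noteq> b)"
      using ps False by simp
    have eq: "E p q b f g (x # xs) = (if p+q=0 then 0 else sc (inverse (of_nat (p+q)))
        (E p (q-1) b f (Dx q x g) xs + E (p-1) q b (Dx p x f) g xs))"
      using x0 Dx_0_y[OF Cons(2)] by (simp add: E_Cons sx_G0)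
    show ?thesis unfolding eq tgt using t1 t3 by (auto intro!: gp_sc gp_add)
  next
    case True
    hence x1: "x \<in> G1" using x by (simp add: gpart_def)
    have t2': "E p (q-1) (b \<noteq> c) f (Dx q x g) xs \<in> gp (foldr (\<lambda>a c. a \<noteq> c) ps' (a \<noteq> (b \<noteq> c)))"
      by (rule Cons.IH[OF mlin_Dx[OF Cons(2)] Cons(3) par_Dx[OF Cons(4) x] l])
    have t2: "E p (q-1) (\<not> b) f (Dx q x g) xs \<in> gp (foldr (\<lambda>a c. a \<noteq> c) ps' (a \<noteq> (\<not> b)))"
      using t2' True by simp
    have sxx: "sx b x \<in> gp True" using x True by (simp add: sx_hom gp_neg sg_def)
    have t3: "E (p-1) q b (Dx p (sx b x) f) g xs \<in> gp (foldr (\<lambda>a c. a \<noteq> c) ps' ((a \<noteq> True) \<noteq> b))"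
      by (rule Cons.IH[OF Cons(2) par_Dx[OF Cons(3) sxx] Cons(4) l])
    have e1: "foldr (\<lambda>a c. a \<noteq> c) ps' (a \<noteq> (\<not> b)) = foldr (\<lambda>a c. a \<noteq> c) ps (a \<noteq> b)"
      using foldr_xr[of ps' "a \<noteq> b" True] ps True by auto
    have e2: "foldr (\<lambda>a c. a \<noteq> c) ps' ((a \<noteq> True) \<noteq> b) = foldr (\<lambda>a c. a \<noteq> c) ps (a \<noteq> b)"
      using foldr_xr[of ps' "a \<noteq> b" True] ps True by auto
    have eq: "E p q b f g (x # xs) = (if p+q=0 then 0 else sc (inverse (of_nat (p+q)))
        (E p (q-1) (\<not> b) f (Dx q x g) xs + E (p-1) q b (Dx p (sx b x) f) g xs))"
      using x1 Dx_0_y[OF Cons(2)] by (simp add: E_Cons)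
    show ?thesis unfolding eq using t2 t3 e1 e2 by (auto intro!: gp_sc gp_add)
  qed
qed

lemma par_E: "mlin g \<Longrightarrow> par a f \<Longrightarrow> par b g \<Longrightarrow> par (a \<noteq> b) (E p q b f g)"
  using par_E_aux unfolding par_def[of "a \<noteq> b"] by blast

lemma ad_Suc: "ad p f (Suc k) = E (p + k) 1 False (ad p f k) one_op" by simp
lemma mlin_ad[simp]: "mlin f \<Longrightarrow> mlin (ad p f n)"
  by (induction n) simp_all
lemma par_ad: "mlin f \<Longrightarrow> par a f \<Longrightarrow> par a (ad p f n)"
proof (induction n)
  case 0 thus ?case by simp
next
  case (Suc n)
  have "par (a \<noteq> False) (E (p + n) 1 False (ad p f n) one_op)"
    by (rule par_E[OF mlin_one Suc.IH[OF Suc.prems] par_one])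
  thus ?case by simp
qed
lemma ad_zero[simp]: "ad p (\<lambda>_. 0) n = (\<lambda>_. 0)"
  by (induction n) simp_all

end
context LS begin

lemma E_zero_g'[simp]: "E p q b f (\<lambda>_. 0) = (\<lambda>_. 0)" by (simp add: fun_eq_iff)
lemma E_zero_f'[simp]: "E p q b (\<lambda>_. 0) g = (\<lambda>_. 0)" by (simp add: fun_eq_iff)
lemma E_sg_g: "E p q b f (\<lambda>ys. sg t (h ys)) xs = sg t (E p q b f h xs)"
  by (cases t) (simp_all add: E_neg_g)
lemma E_sg_f: "E p q b (\<lambda>ys. sg t (h ys)) g xs = sg t (E p q b h g xs)"
  by (cases t) (simp_all add: E_neg_f)

lemma sx_sx': "sx b (sx c x) = sx (c \<noteq> b) x" using sx_sx[of b c x] by (cases b; cases c) simp_all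

lemma DE0: "Dx p y (E p 0 c f h) = (\<lambda>ys. E (p-1) 0 c (Dx p (sx c y) f) h ys)"
  using DE[of p 0 y c f h] by simp

lemma p0_gp: "p0 x \<in> gp False" using pr0_G0 by (simp add: gpart_def)
lemma p1_gp: "p1 x \<in> gp True" using pr1_G1 by (simp add: gpart_def)
lemma sg_gp: "y \<in> gp d \<Longrightarrow> sg t y \<in> gp d" by (cases t) (simp_all add: gp_neg)

lemma Jz:
  assumes "mlin g" "par b g" "z \<in> gp c"
  shows "E (p+q) 0 c (E p q b f g) (elem z) xs
       = E p q (b \<noteq> c) f (E q 0 c g (elem z)) xs + sg (b \<and> c) (E p q b (E p 0 c f (elem z)) g xs)"
  using assms
proof (induction xs arbitrary: p q b f g)
  case Nil
  show ?case
  proof (cases "p + q = 0")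
    case True
    thus ?thesis using J0[OF par_Nil[OF Nil(2)] Nil(3)] by simp
  next
    case False
    hence "p \<noteq> 0 \<or> q \<noteq> 0" by simp
    thus ?thesis by (elim disjE) simp_all
  qed
next
  case (Cons x xs)
  note mg = Cons.prems(1) and pg = Cons.prems(2) and zc = Cons.prems(3)
  show ?case
  proof (cases "p + q = 0")
    case True thus ?thesis by (simp add: E_Cons)
  next
    case False
    define i where "i = inverse (of_nat (p+q) :: 'k)"
    have L: "E (p+q) 0 c (E p q b f g) (elem z) (x#xs) = sc i (
         E (p+q-1) 0 c (E p (q-1) b f (Dx q (p0 x) g)) (elem z) xs
       + E (p+q-1) 0 c (E p (q-1) (\<not> b) f (Dx q (sg c (p1 x)) g)) (elem z) xs
       + E (p+q-1) 0 c (E (p-1) q b (Dx p (sx (b \<noteq> c) x) f) g) (elem z) xs)"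
      using False by (simp add: E_Cons DE E_sum3_f i_def pr1_sx sx_sx)
    have R1: "E p q (b \<noteq> c) f (E q 0 c g (elem z)) (x#xs) = sc i (
         E p (q-1) (b \<noteq> c) f (E (q-1) 0 c (Dx q (p0 x) g) (elem z)) xs
       + E p (q-1) (\<not> (b \<noteq> c)) f (E (q-1) 0 c (Dx q (sg c (p1 x)) g) (elem z)) xs
       + E (p-1) q (b \<noteq> c) (Dx p (sx (b \<noteq> c) x) f) (E q 0 c g (elem z)) xs)"
      using False by (simp add: E_Cons DE0 i_def sx_pr1)
    have R2: "E p q b (E p 0 c f (elem z)) g (x#xs) = sc i (
         E p (q-1) b (E p 0 c f (elem z)) (Dx q (p0 x) g) xs
       + E p (q-1) (\<not> b) (E p 0 c f (elem z)) (Dx q (p1 x) g) xs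
       + E (p-1) q b (E (p-1) 0 c (Dx p (sx (b \<noteq> c) x) f) (elem z)) g xs)"
      using False by (simp add: E_Cons DE0 i_def sx_sx')
    have T1: "E (p+q-1) 0 c (E p (q-1) b f (Dx q (p0 x) g)) (elem z) xs
       = E p (q-1) (b \<noteq> c) f (E (q-1) 0 c (Dx q (p0 x) g) (elem z)) xs
       + sg (b \<and> c) (E p (q-1) b (E p 0 c f (elem z)) (Dx q (p0 x) g) xs)"
    proof (cases q)
      case 0 thus ?thesis by simp
    next
      case (Suc q')
      have "par (b \<noteq> False) (Dx q (p0 x) g)" by (rule par_Dx[OF pg p0_gp])
      hence "par b (Dx q (p0 x) g)" by simp
      thus ?thesis using Cons.IH[where p=p and q=q' and b=b and f=f and g="Dx q (p0 x) g", OF mlin_Dx[OF mg] _ zc] Suc by simp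
    qed
    have T2: "E (p+q-1) 0 c (E p (q-1) (\<not> b) f (Dx q (sg c (p1 x)) g)) (elem z) xs
       = E p (q-1) ((\<not> b) \<noteq> c) f (E (q-1) 0 c (Dx q (sg c (p1 x)) g) (elem z)) xs
       + sg ((\<not> b) \<and> c) (E p (q-1) (\<not> b) (E p 0 c f (elem z)) (Dx q (sg c (p1 x)) g) xs)"
    proof (cases q)
      case 0 thus ?thesis by simp
    next
      case (Suc q')
      have "par (b \<noteq> True) (Dx q (sg c (p1 x)) g)" by (rule par_Dx[OF pg sg_gp[OF p1_gp]])
      hence "par (\<not> b) (Dx q (sg c (p1 x)) g)" by simp
      thus ?thesis using Cons.IH[where p=p and q=q' and b="\<not> b" and f=f and g="Dx q (sg c (p1 x)) g", OF mlin_Dx[OF mg] _ zc] Suc by simp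
    qed
    have T3: "E (p+q-1) 0 c (E (p-1) q b (Dx p (sx (b \<noteq> c) x) f) g) (elem z) xs
       = E (p-1) q (b \<noteq> c) (Dx p (sx (b \<noteq> c) x) f) (E q 0 c g (elem z)) xs
       + sg (b \<and> c) (E (p-1) q b (E (p-1) 0 c (Dx p (sx (b \<noteq> c) x) f) (elem z)) g xs)"
    proof (cases p)
      case 0 thus ?thesis by simp
    next
      case (Suc p')
      thus ?thesis using Cons.IH[where p=p' and q=q and b=b and f="Dx p (sx (b \<noteq> c) x) f" and g=g, OF mg pg zc] by simp
    qed
    show ?thesis
      unfolding L R1 R2 T1 T2 T3
      by (cases b; cases c) (simp_all add: Dx_sg_y[OF mg] Dx_neg_y[OF mg] E_neg_g E_sg_g V.scale_right_distrib algebra_simps)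
  qed
qed

lemma Dx_one[simp]: "Dx (Suc 0) y one_op = elem y"
  by (simp add: Dx_def one_op_def elem_def fun_eq_iff split: list.splits)
lemma elem_sg: "elem (sg t v) = (\<lambda>ys. sg t (elem v ys))"
  by (cases t) (simp_all add: elem_def fun_eq_iff)

lemma DE1: "Dx (Suc p) y (E p (Suc 0) False f one_op) = (\<lambda>ys. E p 0 False f (elem (p0 y)) ys
   + E p 0 True f (elem (p1 y)) ys + E (p-1) (Suc 0) False (Dx p y f) one_op ys)"
  using DE[of p 1 y False f one_op] by simp

lemma DL:
  assumes "mlin g" "par b g"
  shows "E (p+q) 1 False (E p q b f g) one_op xs
       = E p (q+1) b f (E q 1 False g one_op) xs + E (p+1) q b (E p 1 False f one_op) g xs"
  using assms
proof (induction xs arbitrary: p q b f g)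
  case Nil
  show ?case by simp
next
  case (Cons x xs)
  note mg = Cons.prems(1) and pg = Cons.prems(2)
  define i where "i = inverse (of_nat (Suc (p+q)) :: 'k)"
  have L: "E (p+q) 1 False (E p q b f g) one_op (x#xs) = sc i (
        E (p+q) 0 False (E p q b f g) (elem (p0 x)) xs
      + E (p+q) 0 True (E p q b f g) (elem (p1 x)) xs
      + (E (p+q-1) 1 False (E p (q-1) b f (Dx q (p0 x) g)) one_op xs
       + E (p+q-1) 1 False (E p (q-1) (\<not> b) f (Dx q (p1 x) g)) one_op xs
       + E (p+q-1) 1 False (E (p-1) q b (Dx p (sx b x) f) g) one_op xs))"
    by (simp add: E_Cons DE E_sum3_f i_def)
  have R1: "E p (q+1) b f (E q 1 False g one_op) (x#xs) = sc i (
        (E p q b f (E q 0 False g (elem (p0 x))) xs + E p q b f (E (q-1) 1 False (Dx q (p0 x) g) one_op) xs)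
      + (E p q (\<not> b) f (E q 0 True g (elem (p1 x))) xs + E p q (\<not> b) f (E (q-1) 1 False (Dx q (p1 x) g) one_op) xs)
      + E (p-1) (q+1) b (Dx p (sx b x) f) (E q 1 False g one_op) xs)"
    by (simp add: E_Cons DE1 E_add_g i_def)
  have R2: "E (p+1) q b (E p 1 False f one_op) g (x#xs) = sc i (
        E (p+1) (q-1) b (E p 1 False f one_op) (Dx q (p0 x) g) xs
      + E (p+1) (q-1) (\<not> b) (E p 1 False f one_op) (Dx q (p1 x) g) xs
      + (E p q b (E p 0 False f (elem (p0 x))) g xs + sg b (E p q b (E p 0 True f (elem (p1 x))) g xs)
         + E p q b (E (p-1) 1 False (Dx p (sx b x) f) one_op) g xs))"
    by (simp add: E_Cons DE1 E_add_f pr1_sx elem_sg E_sg_g E_sg_f i_def)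
  have J1: "E (p+q) 0 False (E p q b f g) (elem (p0 x)) xs
      = E p q b f (E q 0 False g (elem (p0 x))) xs + E p q b (E p 0 False f (elem (p0 x))) g xs"
    using Jz[OF mg pg p0_gp, where p=p and q=q and f=f and xs=xs] by simp
  have J2: "E (p+q) 0 True (E p q b f g) (elem (p1 x)) xs
      = E p q (\<not> b) f (E q 0 True g (elem (p1 x))) xs + sg b (E p q b (E p 0 True f (elem (p1 x))) g xs)"
    using Jz[OF mg pg p1_gp, where p=p and q=q and f=f and xs=xs] by simp
  have T1: "E (p+q-1) 1 False (E p (q-1) b f (Dx q (p0 x) g)) one_op xs
      = E p q b f (E (q-1) 1 False (Dx q (p0 x) g) one_op) xs
      + E (p+1) (q-1) b (E p 1 False f one_op) (Dx q (p0 x) g) xs"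
  proof (cases q)
    case 0 thus ?thesis by simp
  next
    case (Suc q')
    have "par (b \<noteq> False) (Dx q (p0 x) g)" by (rule par_Dx[OF pg p0_gp])
    hence "par b (Dx q (p0 x) g)" by simp
    thus ?thesis using Cons.IH[where p=p and q=q' and b=b and f=f and g="Dx q (p0 x) g", OF mlin_Dx[OF mg]] Suc by simp
  qed
  have T2: "E (p+q-1) 1 False (E p (q-1) (\<not> b) f (Dx q (p1 x) g)) one_op xs
      = E p q (\<not> b) f (E (q-1) 1 False (Dx q (p1 x) g) one_op) xs
      + E (p+1) (q-1) (\<not> b) (E p 1 False f one_op) (Dx q (p1 x) g) xs"
  proof (cases q)
    case 0 thus ?thesis by simp
  next
    case (Suc q')
    have "par (b \<noteq> True) (Dx q (p1 x) g)" by (rule par_Dx[OF pg p1_gp])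
    hence "par (\<not> b) (Dx q (p1 x) g)" by simp
    thus ?thesis using Cons.IH[where p=p and q=q' and b="\<not> b" and f=f and g="Dx q (p1 x) g", OF mlin_Dx[OF mg]] Suc by simp
  qed
  have T3: "E (p+q-1) 1 False (E (p-1) q b (Dx p (sx b x) f) g) one_op xs
      = E (p-1) (q+1) b (Dx p (sx b x) f) (E q 1 False g one_op) xs
      + E p q b (E (p-1) 1 False (Dx p (sx b x) f) one_op) g xs"
  proof (cases p)
    case 0 thus ?thesis by simp
  next
    case (Suc p')
    thus ?thesis using Cons.IH[where p=p' and q=q and b=b and f="Dx p (sx b x) f" and g=g, OF mg pg] by simp
  qed
  show ?case
    unfolding L R1 R2 J1 J2 T1 T2 T3
    unfolding V.scale_right_distrib[symmetric]
    by (rule arg_cong[where f="sc i"]) (simp only: ac_simps)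
qed

lemma cmp_sc_f: "cmp p q b (\<lambda>ys. sc c (f ys)) g xs = sc c (cmp p q b f g xs)"
  by (induction xs arbitrary: p q b f g) (simp_all add: V.scale_right_distrib)
lemma cmp_add_f: "cmp p q b (\<lambda>ys. f1 ys + f2 ys) g xs = cmp p q b f1 g xs + cmp p q b f2 g xs"
  by (induction xs arbitrary: p q b f1 f2 g) (simp_all add: algebra_simps)
lemma cmp_sc_g: "mlin f \<Longrightarrow> cmp p q b f (\<lambda>ys. sc c (g ys)) xs = sc c (cmp p q b f g xs)"
proof (induction xs arbitrary: p q b f g)
  case Nil thus ?case by (simp add: mlin_hd_sc)
next
  case (Cons x xs) thus ?case by (simp add: mlin_hd_sc mlin_cons V.scale_right_distrib)
qed

definition cf :: "nat \<Rightarrow> nat \<Rightarrow> 'k" where "cf p q = fact p * fact q / fact (p + q - 1)"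

lemma dot_eq: "dot p q b f g = (if p = 0 then (\<lambda>_. 0) else (\<lambda>xs. sc (cf p q) (cmp p q b f g xs)))"
  by (simp add: dot_op_def cf_def)

lemma dot_add_f: "dot p q b (\<lambda>ys. f1 ys + f2 ys) g xs = dot p q b f1 g xs + dot p q b f2 g xs"
  by (simp add: dot_eq cmp_add_f V.scale_right_distrib)
lemma dot_sc_f: "dot p q b (\<lambda>ys. sc c (f ys)) g xs = sc c (dot p q b f g xs)"
  by (simp add: dot_eq cmp_sc_f mult.commute)
lemma dot_sg_f: "dot p q b (\<lambda>ys. sg t (f ys)) g xs = sg t (dot p q b f g xs)"
  using dot_sc_f[of p q b "-1" f g xs] by (cases t) simp_all
lemma dot_sc_g: "mlin f \<Longrightarrow> dot p q b f (\<lambda>ys. sc c (g ys)) xs = sc c (dot p q b f g xs)"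
  by (simp add: dot_eq cmp_sc_g mult.commute)
lemma dot_sg_g: "mlin f \<Longrightarrow> dot p q b f (\<lambda>ys. sg t (g ys)) xs = sg t (dot p q b f g xs)"
  using dot_sc_g[of f p q b "-1" g xs] by (cases t) simp_all
lemma dot_neg_g: "mlin f \<Longrightarrow> dot p q b f (\<lambda>ys. - g ys) xs = - dot p q b f g xs"
  using dot_sc_g[of f p q b "-1" g xs] by simp
lemma dot_neg_g': "mlin f \<Longrightarrow> dot p q b f (\<lambda>ys. - g ys) = (\<lambda>xs. - dot p q b f g xs)"
  using dot_neg_g by (simp add: fun_eq_iff)
lemma dot_neg_f: "dot p q b (\<lambda>ys. - f ys) g xs = - dot p q b f g xs"
  using dot_sc_f[of p q b "-1" f g xs] by simp

lemma dot_sum3_f: "dot p q b (\<lambda>ys. f1 ys + f2 ys + f3 ys) g xs = dot p q b f1 g xs + dot p q b f2 g xs + dot p q b f3 g xs"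
  by (simp add: dot_add_f)
lemma dot_zero_f[simp]: "dot p q b (\<lambda>_. 0) g = (\<lambda>_. 0)"
  using dot_sc_f[of p q b 0 "\<lambda>_. 0" g] by (simp add: fun_eq_iff)

lemma dot_Nil: "p \<noteq> 0 \<Longrightarrow> q \<noteq> 0 \<Longrightarrow> dot p q b f g [] = 0"
  by (simp add: dot_eq)

lemma cf_id1: "(inverse (of_nat (Suc p' + Suc q' - 1)) * (cf (Suc p') q' * of_nat (Suc q')) :: 'k) = cf (Suc p') (Suc q')"
  by (simp add: cf_def fact_Suc[of "p' + q'"] fact_Suc[of q'] field_simps del: fact_Suc)
lemma cf_id2: "(inverse (of_nat (Suc p' + Suc q' - 1)) * (cf p' (Suc q') * of_nat (Suc p')) :: 'k) = cf (Suc p') (Suc q')"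
proof -
  have a: "cf p' (Suc q') = (fact p' * fact (Suc q') / fact (p'+q') :: 'k)" by (simp add: cf_def)
  have b: "cf (Suc p') (Suc q') = (fact (Suc p') * fact (Suc q') / fact (Suc (p'+q')) :: 'k)" by (simp add: cf_def)
  have c: "Suc p' + Suc q' - 1 = Suc (p' + q')" by simp
  have f1: "fact (Suc p') = of_nat (Suc p') * (fact p' :: 'k)" by (rule fact_Suc)
  have f2: "fact (Suc (p'+q')) = of_nat (Suc (p'+q')) * (fact (p'+q') :: 'k)" by (rule fact_Suc)
  have nz: "(fact (p'+q') :: 'k) \<noteq> 0" by simp
  have nz2: "(of_nat (Suc (p'+q')) :: 'k) \<noteq> 0" by (metis of_nat_eq_0_iff nat.distinct(1))
  show ?thesis unfolding a b c f1 f2 using nz nz2 by (simp add: field_simps del: of_nat_Suc)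
qed

lemma dot_Cons:
  assumes "p \<noteq> 0" "q \<noteq> 0" "mlin F"
  shows "dot p q b F g (x # xs) = sc (inverse (of_nat (p + q - 1)))
     (dot p (q-1) b F (Dx q (p0 x) g) xs + dot p (q-1) (\<not> b) F (Dx q (p1 x) g) xs
      + dot (p-1) q b (Dx p (sx b x) F) g xs)"
proof -
  obtain p' q' where pq: "p = Suc p'" "q = Suc q'" using assms(1,2) by (metis not0_implies_Suc)
  have e1: "dot p (q-1) bb F (Dx q y g) xs = sc (cf p q' * of_nat q) (cmp p q' bb F (\<lambda>ys. g (y # ys)) xs)" for y bb
    using pq by (simp add: dot_eq Dx_def cmp_sc_g[OF assms(3)])
  have e3: "dot (p-1) q b (Dx p (sx b x) F) g xs = sc (cf p' q * of_nat p) (cmp p' q b (\<lambda>ys. F (sx b x # ys)) g xs)"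
    using pq by (cases p') (simp_all add: dot_eq Dx_def cmp_sc_f)
  have l: "dot p q b F g (x # xs) = sc (cf p q) (cmp p q' b F (\<lambda>ys. g (p0 x # ys)) xs
      + cmp p q' (\<not> b) F (\<lambda>ys. g (p1 x # ys)) xs + cmp p' q b (\<lambda>ys. F (sx b x # ys)) g xs)"
    using pq by (simp add: dot_eq)
  show ?thesis unfolding l e1 e3
    using cf_id1[of p' q'] cf_id2[of p' q'] pq
    by (simp add: V.scale_right_distrib)
qed

lemma DDOT:
  assumes "p \<noteq> 0" "q \<noteq> 0" "mlin F"
  shows "Dx (p + q - 1) x (dot p q b F g) = (\<lambda>ys.
     dot p (q-1) b F (Dx q (p0 x) g) ys + dot p (q-1) (\<not> b) F (Dx q (p1 x) g) ys
      + dot (p-1) q b (Dx p (sx b x) F) g ys)"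
proof -
  have "p + q - 1 \<noteq> 0" using assms by simp
  hence "(of_nat (p + q - 1) :: 'k) \<noteq> 0" by (metis of_nat_eq_0_iff)
  thus ?thesis by (simp add: Dx_def dot_Cons[OF assms] fun_eq_iff del: of_nat_diff)
qed

lemma mlin_dot0: "mlin f \<Longrightarrow> mlin (Dx p y f)" by simp

lemma E_q0: "E p 0 b f g xs = E p 0 b f (elem (g [])) xs"
  by (induction xs arbitrary: p f) (simp_all add: E_Cons)

lemma M0:
  assumes "mlin f" "par b g"
  shows "dot p 0 b (E p 0 c f (elem z)) g xs = sg (b \<and> c) (E (p-1) 0 c (dot p 0 b f g) (elem z) xs)"
proof -
  have w: "g [] \<in> gp b" by (rule par_Nil[OF assms(2)])
  have "sx c (g []) = sg (c \<and> b) (g [])" by (rule sx_hom[OF w])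
  thus ?thesis by (simp add: dot_q0 DE0 Dx_sg_y[OF assms(1)] E_sg_f conj_commute)
qed

lemma M:
  assumes "mlin f" "mlin g" "par b g" "z \<in> gp c"
  shows "dot p q b (E p 0 c f (elem z)) g xs = sg (b \<and> c) (E (p+q-1) 0 c (dot p q b f g) (elem z) xs)"
  using assms
proof (induction xs arbitrary: p q b f g)
  case Nil
  show ?case
  proof (cases "q = 0")
    case True thus ?thesis using M0[OF Nil(1,3)] by simp
  next
    case False
    thus ?thesis by (cases "p = 0") (simp_all add: dot_Nil)
  qed
next
  case (Cons x xs)
  note mf = Cons.prems(1) and mg = Cons.prems(2) and pg = Cons.prems(3) and zc = Cons.prems(4)
  show ?case
  proof (cases "q = 0")
    case True thus ?thesis using M0[OF mf pg] by simp
  next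
    case qn: False
    show ?thesis
    proof (cases "p = 0")
      case True thus ?thesis by simp
    next
      case pn: False
      define i where "i = inverse (of_nat (p + q - 1) :: 'k)"
      have L: "dot p q b (E p 0 c f (elem z)) g (x # xs) = sc i (
           dot p (q-1) b (E p 0 c f (elem z)) (Dx q (p0 x) g) xs
         + dot p (q-1) (\<not> b) (E p 0 c f (elem z)) (Dx q (p1 x) g) xs
         + dot (p-1) q b (E (p-1) 0 c (Dx p (sx (b \<noteq> c) x) f) (elem z)) g xs)"
        using pn qn by (simp add: dot_Cons mf i_def DE0 sx_sx')
      have pq: "p + q - 1 \<noteq> 0" using pn qn by simp
      have R: "E (p+q-1) 0 c (dot p q b f g) (elem z) (x # xs) = sc i (
           E (p+q-1-1) 0 c (dot p (q-1) b f (Dx q (p0 x) g)) (elem z) xs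
         + E (p+q-1-1) 0 c (dot p (q-1) (\<not> b) f (Dx q (sg c (p1 x)) g)) (elem z) xs
         + E (p+q-1-1) 0 c (dot (p-1) q b (Dx p (sx (b \<noteq> c) x) f) g) (elem z) xs)"
      proof -
        have D: "Dx (p + q - Suc 0) (sx c x) (dot p q b f g) = (\<lambda>ys.
           dot p (q-1) b f (Dx q (p0 (sx c x)) g) ys + dot p (q-1) (\<not> b) f (Dx q (p1 (sx c x)) g) ys
            + dot (p-1) q b (Dx p (sx b (sx c x)) f) g ys)"
          using DDOT[OF pn qn mf, of "sx c x" b g] by simp
        show ?thesis using pq by (simp add: E_Cons i_def D E_sum3_f pr1_sx sx_sx)
      qed
      obtain q' where q': "q = Suc q'" using qn by (metis not0_implies_Suc)
      obtain p' where p': "p = Suc p'" using pn by (metis not0_implies_Suc)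
      have A1: "dot p (q-1) b (E p 0 c f (elem z)) (Dx q (p0 x) g) xs
          = sg (b \<and> c) (E (p+q-1-1) 0 c (dot p (q-1) b f (Dx q (p0 x) g)) (elem z) xs)"
      proof -
        have "par (b \<noteq> False) (Dx q (p0 x) g)" by (rule par_Dx[OF pg p0_gp])
        hence "par b (Dx q (p0 x) g)" by simp
        thus ?thesis using Cons.IH[where p=p and q=q' and b=b and f=f and g="Dx q (p0 x) g", OF mf mlin_Dx[OF mg] _ zc] q' by simp
      qed
      have A2: "dot p (q-1) (\<not> b) (E p 0 c f (elem z)) (Dx q (p1 x) g) xs
          = sg ((\<not> b) \<and> c) (E (p+q-1-1) 0 c (dot p (q-1) (\<not> b) f (Dx q (p1 x) g)) (elem z) xs)"
      proof -
        have "par (b \<noteq> True) (Dx q (p1 x) g)" by (rule par_Dx[OF pg p1_gp])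
        hence "par (\<not> b) (Dx q (p1 x) g)" by simp
        thus ?thesis using Cons.IH[where p=p and q=q' and b="\<not> b" and f=f and g="Dx q (p1 x) g", OF mf mlin_Dx[OF mg] _ zc] q' by simp
      qed
      have A3: "dot (p-1) q b (E (p-1) 0 c (Dx p (sx (b \<noteq> c) x) f) (elem z)) g xs
          = sg (b \<and> c) (E (p+q-1-1) 0 c (dot (p-1) q b (Dx p (sx (b \<noteq> c) x) f) g) (elem z) xs)"
        using Cons.IH[where p=p' and q=q and b=b and f="Dx p (sx (b \<noteq> c) x) f" and g=g, OF mlin_Dx[OF mf] mg pg zc] p' q' by simp
      show ?thesis
        unfolding L R A1 A2 A3
        by (cases b; cases c) (simp_all add: Dx_sg_y[OF mg] Dx_neg_y[OF mg] dot_sg_g[OF mf] dot_neg_g'[OF mf] E_sg_f E_neg_f V.scale_right_distrib V.scale_right_diff_distrib)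
    qed
  qed
qed

lemma L0:
  assumes "mlin f" "par b g"
  shows "dot (Suc p) 0 b (E p (Suc 0) False f one_op) g xs = E p 0 b f g xs + E (p-1) (Suc 0) False (dot p 0 b f g) one_op xs"
proof -
  have w: "g [] \<in> gp b" by (rule par_Nil[OF assms(2)])
  show ?thesis
  proof (cases b)
    case True
    hence w1: "g [] \<in> G1" using w by (simp add: gpart_def)
    show ?thesis using True w1 E_q0[of p True f g xs] by (simp add: dot_q0 DE1)
  next
    case False
    hence w0: "g [] \<in> G0" using w by (simp add: gpart_def)
    show ?thesis using False w0 E_q0[of p False f g xs] by (simp add: dot_q0 DE1)
  qed
qed

lemma Lm:
  assumes "mlin f" "mlin g" "par b g"
  shows "dot (Suc p) q b (E p (Suc 0) False f one_op) g xs = E p q b f g xs + E (p+q-1) (Suc 0) False (dot p q b f g) one_op xs"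
  using assms
proof (induction xs arbitrary: p q b f g)
  case Nil
  show ?case
  proof (cases "q = 0")
    case True thus ?thesis using L0[OF Nil(1,3)] by simp
  next
    case False
    thus ?thesis by (simp add: dot_Nil)
  qed
next
  case (Cons x xs)
  note mf = Cons.prems(1) and mg = Cons.prems(2) and pg = Cons.prems(3)
  show ?case
  proof (cases "q = 0")
    case True thus ?thesis using L0[OF mf pg] by simp
  next
    case qn: False
    obtain q' where q': "q = Suc q'" using qn by (metis not0_implies_Suc)
    define i where "i = inverse (of_nat (p + q) :: 'k)"
    have LL: "dot (Suc p) q b (E p (Suc 0) False f one_op) g (x # xs) = sc i (
         dot (Suc p) (q-1) b (E p (Suc 0) False f one_op) (Dx q (p0 x) g) xs
       + dot (Suc p) (q-1) (\<not> b) (E p (Suc 0) False f one_op) (Dx q (p1 x) g) xs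
       + (dot p q b (E p 0 False f (elem (p0 x))) g xs
          + sg b (dot p q b (E p 0 True f (elem (p1 x))) g xs)
          + dot p q b (E (p-1) (Suc 0) False (Dx p (sx b x) f) one_op) g xs))"
      using qn by (simp add: dot_Cons mf i_def DE1 pr1_sx elem_sg E_sg_g dot_sum3_f dot_sg_f)
    have R1: "E p q b f g (x # xs) = sc i (E p (q-1) b f (Dx q (p0 x) g) xs
         + E p (q-1) (\<not> b) f (Dx q (p1 x) g) xs + E (p-1) q b (Dx p (sx b x) f) g xs)"
      using qn by (simp add: E_Cons i_def)
    have R2: "E (p+q-1) (Suc 0) False (dot p q b f g) one_op (x # xs) = sc i (
          E (p+q-1) 0 False (dot p q b f g) (elem (p0 x)) xs
        + E (p+q-1) 0 True (dot p q b f g) (elem (p1 x)) xs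
        + (E (p+q-1-1) (Suc 0) False (dot p (q-1) b f (Dx q (p0 x) g)) one_op xs
         + E (p+q-1-1) (Suc 0) False (dot p (q-1) (\<not> b) f (Dx q (p1 x) g)) one_op xs
         + E (p+q-1-1) (Suc 0) False (dot (p-1) q b (Dx p (sx b x) f) g) one_op xs))"
    proof (cases "p = 0")
      case True thus ?thesis using qn by (simp add: E_Cons i_def)
    next
      case pn: False
      have D: "Dx (p + q - Suc 0) x (dot p q b f g) = (\<lambda>ys.
           dot p (q-1) b f (Dx q (p0 x) g) ys + dot p (q-1) (\<not> b) f (Dx q (p1 x) g) ys
            + dot (p-1) q b (Dx p (sx b x) f) g ys)"
        using DDOT[OF pn qn mf, of x b g] by simp
      show ?thesis using qn pn by (simp add: E_Cons i_def D E_sum3_f)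
    qed
    have B1: "dot (Suc p) (q-1) b (E p (Suc 0) False f one_op) (Dx q (p0 x) g) xs
        = E p (q-1) b f (Dx q (p0 x) g) xs + E (p+q-1-1) (Suc 0) False (dot p (q-1) b f (Dx q (p0 x) g)) one_op xs"
    proof -
      have "par (b \<noteq> False) (Dx q (p0 x) g)" by (rule par_Dx[OF pg p0_gp])
      hence "par b (Dx q (p0 x) g)" by simp
      thus ?thesis using Cons.IH[where p=p and q=q' and b=b and f=f and g="Dx q (p0 x) g", OF mf mlin_Dx[OF mg]] q' by simp
    qed
    have B2: "dot (Suc p) (q-1) (\<not> b) (E p (Suc 0) False f one_op) (Dx q (p1 x) g) xs
        = E p (q-1) (\<not> b) f (Dx q (p1 x) g) xs + E (p+q-1-1) (Suc 0) False (dot p (q-1) (\<not> b) f (Dx q (p1 x) g)) one_op xs"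
    proof -
      have "par (b \<noteq> True) (Dx q (p1 x) g)" by (rule par_Dx[OF pg p1_gp])
      hence "par (\<not> b) (Dx q (p1 x) g)" by simp
      thus ?thesis using Cons.IH[where p=p and q=q' and b="\<not> b" and f=f and g="Dx q (p1 x) g", OF mf mlin_Dx[OF mg]] q' by simp
    qed
    have B3: "dot p q b (E (p-1) (Suc 0) False (Dx p (sx b x) f) one_op) g xs
        = E (p-1) q b (Dx p (sx b x) f) g xs + E (p+q-1-1) (Suc 0) False (dot (p-1) q b (Dx p (sx b x) f) g) one_op xs"
    proof (cases p)
      case 0 thus ?thesis by simp
    next
      case (Suc p')
      thus ?thesis using Cons.IH[where p=p' and q=q and b=b and f="Dx p (sx b x) f" and g=g, OF mlin_Dx[OF mf] mg pg] q' by simp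
    qed
    have M1: "dot p q b (E p 0 False f (elem (p0 x))) g xs = E (p+q-1) 0 False (dot p q b f g) (elem (p0 x)) xs"
      using M[OF mf mg pg p0_gp, where p=p and q=q and xs=xs] by simp
    have M2: "dot p q b (E p 0 True f (elem (p1 x))) g xs = sg b (E (p+q-1) 0 True (dot p q b f g) (elem (p1 x)) xs)"
      using M[OF mf mg pg p1_gp, where p=p and q=q and xs=xs] by simp
    show ?thesis
      unfolding LL R1 R2 B1 B2 B3 M1 M2 sg_simps
      unfolding V.scale_right_distrib[symmetric]
      by (rule arg_cong[where f="sc i"]) (simp only: ac_simps)
  qed
qed

lemma pascal1:
  "(\<Sum>k\<le>n. sc (of_nat (n choose k)) (h k (Suc (n-k)) + h (Suc k) (n-k)))
   = (\<Sum>k\<le>Suc n. sc (of_nat (Suc n choose k)) (h k (Suc n - k)))"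
proof -
  have a0: "(\<Sum>k\<le>n. sc (of_nat (n choose k)) (h k (Suc (n-k)))) = (\<Sum>k\<le>n. sc (of_nat (n choose k)) (h k (Suc n - k)))"
    by (rule sum.cong) (auto simp: Suc_diff_le)
  also have "\<dots> = (\<Sum>k\<le>Suc n. sc (of_nat (n choose k)) (h k (Suc n - k)))"
    by simp
  also have "\<dots> = h 0 (Suc n) + (\<Sum>k\<le>n. sc (of_nat (n choose Suc k)) (h (Suc k) (n - k)))"
    by (simp add: sum.atMost_Suc_shift del: sum.atMost_Suc)
  finally have a: "(\<Sum>k\<le>n. sc (of_nat (n choose k)) (h k (Suc (n-k)))) = h 0 (Suc n) + (\<Sum>k\<le>n. sc (of_nat (n choose Suc k)) (h (Suc k) (n - k)))" .
  have b: "(\<Sum>k\<le>Suc n. sc (of_nat (Suc n choose k)) (h k (Suc n - k))) = h 0 (Suc n)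
      + ((\<Sum>k\<le>n. sc (of_nat (n choose k)) (h (Suc k) (n-k))) + (\<Sum>k\<le>n. sc (of_nat (n choose Suc k)) (h (Suc k) (n-k))))"
    by (simp add: sum.atMost_Suc_shift V.scale_left_distrib sum.distrib del: sum.atMost_Suc)
  show ?thesis unfolding b by (simp add: V.scale_right_distrib sum.distrib a)
qed

lemma pascal2:
  "(\<Sum>i<n. sc (of_nat (n choose i)) (u i + u (Suc i))) + u n
   = (\<Sum>i<Suc n. sc (of_nat (Suc n choose i)) (u i))"
proof -
  have a: "(\<Sum>i<n. sc (of_nat (n choose i)) (u i)) + u n = (\<Sum>i<Suc n. sc (of_nat (n choose i)) (u i))"
    by simp
  have b: "(\<Sum>i<Suc n. sc (of_nat (n choose i)) (u i)) = u 0 + (\<Sum>i<n. sc (of_nat (n choose Suc i)) (u (Suc i)))"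
    by (simp add: sum.lessThan_Suc_shift del: sum.lessThan_Suc)
  have c: "(\<Sum>i<Suc n. sc (of_nat (Suc n choose i)) (u i)) = u 0
     + ((\<Sum>i<n. sc (of_nat (n choose i)) (u (Suc i))) + (\<Sum>i<n. sc (of_nat (n choose Suc i)) (u (Suc i))))"
    by (simp add: sum.lessThan_Suc_shift V.scale_left_distrib sum.distrib del: sum.lessThan_Suc)
  have "(\<Sum>i<n. sc (of_nat (n choose i)) (u i + u (Suc i))) + u n
     = ((\<Sum>i<n. sc (of_nat (n choose i)) (u i)) + u n) + (\<Sum>i<n. sc (of_nat (n choose i)) (u (Suc i)))"
    by (simp add: V.scale_right_distrib sum.distrib)
  also have "\<dots> = u 0 + (\<Sum>i<n. sc (of_nat (n choose Suc i)) (u (Suc i))) + (\<Sum>i<n. sc (of_nat (n choose i)) (u (Suc i)))"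
    unfolding a b ..
  finally show ?thesis unfolding c by (simp add: ac_simps)
qed

lemma C1:
  assumes "mlin g" "par b g"
  shows "ad (p+q) (E p q b f g) n = (\<lambda>xs. \<Sum>k\<le>n. sc (of_nat (n choose k))
          (E (p + k) (q + (n - k)) b (ad p f k) (ad q g (n - k)) xs))"
proof (induction n)
  case 0 show ?case by simp
next
  case (Suc n)
  show ?case
  proof
    fix xs
    define h where "h k j = E (p + k) (q + j) b (ad p f k) (ad q g j) xs" for k j
    have "ad (p+q) (E p q b f g) (Suc n) xs = E (p+q+n) (Suc 0) False (ad (p+q) (E p q b f g) n) one_op xs"
      by simp
    also have "\<dots> = (\<Sum>k\<le>n. sc (of_nat (n choose k)) (E (p+q+n) (Suc 0) False (E (p + k) (q + (n - k)) b (ad p f k) (ad q g (n - k))) one_op xs))"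
      unfolding Suc.IH by (simp add: E_sum_f E_sc_f)
    also have "\<dots> = (\<Sum>k\<le>n. sc (of_nat (n choose k)) (h k (Suc (n-k)) + h (Suc k) (n-k)))"
    proof (rule sum.cong[OF refl])
      fix k assume "k \<in> {..n}"
      hence k: "k \<le> n" by simp
      have e: "p + q + n = (p + k) + (q + (n - k))" using k by simp
      have d: "E (p+q+n) 1 False (E (p + k) (q + (n - k)) b (ad p f k) (ad q g (n - k))) one_op xs
         = E (p + k) (q + (n - k) + 1) b (ad p f k) (E (q + (n - k)) 1 False (ad q g (n - k)) one_op) xs
           + E (p + k + 1) (q + (n - k)) b (E (p + k) 1 False (ad p f k) one_op) (ad q g (n - k)) xs"
        unfolding e by (rule DL[OF mlin_ad[OF assms(1)] par_ad[OF assms]])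
      have h1: "h k (Suc (n-k)) = E (p + k) (q + (n - k) + 1) b (ad p f k) (E (q + (n - k)) 1 False (ad q g (n - k)) one_op) xs"
        unfolding h_def by simp
      have h2: "h (Suc k) (n-k) = E (p + k + 1) (q + (n - k)) b (E (p + k) 1 False (ad p f k) one_op) (ad q g (n - k)) xs"
        unfolding h_def by simp
      show "sc (of_nat (n choose k)) (E (p+q+n) (Suc 0) False (E (p + k) (q + (n - k)) b (ad p f k) (ad q g (n - k))) one_op xs)
          = sc (of_nat (n choose k)) (h k (Suc (n-k)) + h (Suc k) (n-k))"
        using d unfolding h1 h2 One_nat_def by (simp only:)
    qed
    also have "\<dots> = (\<Sum>k\<le>Suc n. sc (of_nat (Suc n choose k)) (h k (Suc n - k)))"
      by (rule pascal1)
    finally show "ad (p+q) (E p q b f g) (Suc n) xs = (\<Sum>k\<le>Suc n. sc (of_nat (Suc n choose k))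
          (E (p + k) (q + (Suc n - k)) b (ad p f k) (ad q g (Suc n - k)) xs))"
      unfolding h_def .
  qed
qed

lemma S_Suc:
  "(\<Sum>i<Suc n. ad (p+i+q) (E (p+i) q b (ad p f i) g) (Suc n - 1 - i) xs)
   = E (p+q+n-1) 1 False (\<lambda>ys. \<Sum>i<n. ad (p+i+q) (E (p+i) q b (ad p f i) g) (n - 1 - i) ys) one_op xs
     + E (p+n) q b (ad p f n) g xs"
proof -
  have "(\<Sum>i<Suc n. ad (p+i+q) (E (p+i) q b (ad p f i) g) (Suc n - 1 - i) xs)
     = (\<Sum>i<n. ad (p+i+q) (E (p+i) q b (ad p f i) g) (Suc n - 1 - i) xs) + E (p+n) q b (ad p f n) g xs"
    by simp
  also have "(\<Sum>i<n. ad (p+i+q) (E (p+i) q b (ad p f i) g) (Suc n - 1 - i) xs)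
     = (\<Sum>i<n. E (p+q+n-1) 1 False (ad (p+i+q) (E (p+i) q b (ad p f i) g) (n - 1 - i)) one_op xs)"
  proof (rule sum.cong[OF refl])
    fix i assume "i \<in> {..<n}"
    hence i: "i < n" by simp
    have e1: "Suc n - 1 - i = Suc (n - 1 - i)" using i by simp
    have e2: "p + i + q + (n - 1 - i) = p + q + n - 1" using i by simp
    show "ad (p+i+q) (E (p+i) q b (ad p f i) g) (Suc n - 1 - i) xs
        = E (p+q+n-1) 1 False (ad (p+i+q) (E (p+i) q b (ad p f i) g) (n - 1 - i)) one_op xs"
      unfolding e1 ad_one.simps(2) e2 ..
  qed
  finally show ?thesis by (simp add: E_sum_f)
qed

lemma T_step:
  assumes "mlin g" "par b g"
  shows "E (p+q+n-1) 1 False (\<lambda>ys. \<Sum>i<n. sc (of_nat (n choose (n - i)))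
            (E (p+i) (q+(n-1-i)) b (ad p f i) (ad q g (n-1-i)) ys)) one_op xs
         + E (p+n) q b (ad p f n) g xs
       = (\<Sum>i<Suc n. sc (of_nat (Suc n choose (Suc n - i)))
            (E (p+i) (q+(Suc n-1-i)) b (ad p f i) (ad q g (Suc n-1-i)) xs))"
proof -
  define u where "u i = E (p+i) (q+(n-i)) b (ad p f i) (ad q g (n-i)) xs" for i
  have a: "E (p+q+n-1) 1 False (\<lambda>ys. \<Sum>i<n. sc (of_nat (n choose (n - i)))
            (E (p+i) (q+(n-1-i)) b (ad p f i) (ad q g (n-1-i)) ys)) one_op xs
     = (\<Sum>i<n. sc (of_nat (n choose i)) (u i + u (Suc i)))"
    unfolding E_sum_f[OF finite_lessThan] E_sc_f
  proof (rule sum.cong[OF refl])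
    fix i assume "i \<in> {..<n}"
    hence i: "i < n" by simp
    have e: "p + q + n - 1 = (p + i) + (q + (n - 1 - i))" using i by simp
    have d: "E (p+q+n-1) 1 False (E (p + i) (q + (n - 1 - i)) b (ad p f i) (ad q g (n - 1 - i))) one_op xs
         = E (p + i) (q + (n - 1 - i) + 1) b (ad p f i) (E (q + (n - 1 - i)) 1 False (ad q g (n - 1 - i)) one_op) xs
           + E (p + i + 1) (q + (n - 1 - i)) b (E (p + i) 1 False (ad p f i) one_op) (ad q g (n - 1 - i)) xs"
      unfolding e by (rule DL[OF mlin_ad[OF assms(1)] par_ad[OF assms]])
    have e3: "n - i = Suc (n - 1 - i)" "n - Suc i = n - 1 - i" using i by simp_all
    have u1: "u i = E (p + i) (q + (n - 1 - i) + 1) b (ad p f i) (E (q + (n - 1 - i)) 1 False (ad q g (n - 1 - i)) one_op) xs"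
      unfolding u_def e3 by simp
    have u2: "u (Suc i) = E (p + i + 1) (q + (n - 1 - i)) b (E (p + i) 1 False (ad p f i) one_op) (ad q g (n - 1 - i)) xs"
      unfolding u_def e3 by simp
    have ch: "n choose (n - i) = n choose i" using i by (simp add: binomial_symmetric[symmetric])
    show "sc (of_nat (n choose (n - i))) (E (p+q+n-1) 1 False (E (p+i) (q+(n-1-i)) b (ad p f i) (ad q g (n-1-i))) one_op xs)
        = sc (of_nat (n choose i)) (u i + u (Suc i))"
      unfolding ch d u1 u2 ..
  qed
  have b: "E (p+n) q b (ad p f n) g xs = u n" unfolding u_def by simp
  have c: "(\<Sum>i<Suc n. sc (of_nat (Suc n choose (Suc n - i)))
            (E (p+i) (q+(Suc n-1-i)) b (ad p f i) (ad q g (Suc n-1-i)) xs))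
       = (\<Sum>i<Suc n. sc (of_nat (Suc n choose i)) (u i))"
  proof (rule sum.cong[OF refl])
    fix i assume "i \<in> {..<Suc n}"
    hence i: "i \<le> n" by simp
    have ch: "Suc n choose (Suc n - i) = Suc n choose i" using i by (simp add: binomial_symmetric[symmetric])
    show "sc (of_nat (Suc n choose (Suc n - i))) (E (p+i) (q+(Suc n-1-i)) b (ad p f i) (ad q g (Suc n-1-i)) xs)
        = sc (of_nat (Suc n choose i)) (u i)"
      unfolding ch u_def by simp
  qed
  show ?thesis unfolding a b c by (rule pascal2)
qed

lemma C3:
  assumes "mlin g" "par b g"
  shows "(\<Sum>i<n. ad (p+i+q) (E (p+i) q b (ad p f i) g) (n - 1 - i) xs)
       = (\<Sum>i<n. sc (of_nat (n choose (n - i))) (E (p+i) (q+(n-1-i)) b (ad p f i) (ad q g (n-1-i)) xs))"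
proof (induction n arbitrary: xs)
  case 0 show ?case by simp
next
  case (Suc n)
  have fe: "(\<lambda>ys. \<Sum>i<n. ad (p+i+q) (E (p+i) q b (ad p f i) g) (n - 1 - i) ys)
          = (\<lambda>ys. \<Sum>i<n. sc (of_nat (n choose (n - i))) (E (p+i) (q+(n-1-i)) b (ad p f i) (ad q g (n-1-i)) ys))"
    using Suc.IH by (rule ext)
  show ?case unfolding S_Suc fe by (rule T_step[OF assms])
qed

lemma C2:
  assumes "mlin f" "mlin g" "par b g"
  shows "dot (p + n) q b (ad p f n) g = (\<lambda>xs. (\<Sum>i<n. ad (p+i+q) (E (p+i) q b (ad p f i) g) (n - 1 - i) xs)
              + ad (p + q - 1) (dot p q b f g) n xs)"
proof (induction n)
  case 0 show ?case by (simp add: fun_eq_iff)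
next
  case (Suc n)
  show ?case
  proof
    fix xs
    have o1: "p + n + q - 1 = p + q + n - 1" by simp
    have r: "ad (p + q - 1) (dot p q b f g) (Suc n) xs = E (p+q+n-1) 1 False (ad (p + q - 1) (dot p q b f g) n) one_op xs"
    proof (cases "p = 0")
      case True thus ?thesis by simp
    next
      case False
      hence "p + q - 1 + n = p + q + n - 1" by simp
      thus ?thesis by simp
    qed
    have "dot (p + Suc n) q b (ad p f (Suc n)) g xs = dot (Suc (p+n)) q b (E (p+n) (Suc 0) False (ad p f n) one_op) g xs"
      by simp
    also have "\<dots> = E (p+n) q b (ad p f n) g xs + E (p+n+q-1) (Suc 0) False (dot (p+n) q b (ad p f n) g) one_op xs"
      by (rule Lm[OF mlin_ad[OF assms(1)] assms(2,3)])
    also have "\<dots> = E (p+n) q b (ad p f n) g xs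
        + E (p+q+n-1) 1 False (\<lambda>ys. \<Sum>i<n. ad (p+i+q) (E (p+i) q b (ad p f i) g) (n - 1 - i) ys) one_op xs
        + E (p+q+n-1) 1 False (ad (p + q - 1) (dot p q b f g) n) one_op xs"
      unfolding Suc.IH o1 One_nat_def E_add_f by (simp add: ac_simps)
    also have "\<dots> = (\<Sum>i<Suc n. ad (p+i+q) (E (p+i) q b (ad p f i) g) (Suc n - 1 - i) xs)
              + ad (p + q - 1) (dot p q b f g) (Suc n) xs"
      unfolding S_Suc r by (simp add: ac_simps)
    finally show "dot (p + Suc n) q b (ad p f (Suc n)) g xs = (\<Sum>i<Suc n. ad (p+i+q) (E (p+i) q b (ad p f i) g) (Suc n - 1 - i) xs)
              + ad (p + q - 1) (dot p q b f g) (Suc n) xs" .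
  qed
qed


lemma hom_mlin:
  assumes h: "is_hom_op sc G0 G1 p b f"
  shows "mlin f"
proof -
  have Z: "\<And>xs. length xs \<noteq> p \<Longrightarrow> f xs = 0"
    and Lin: "\<And>as bs. length as + length bs + 1 = p \<Longrightarrow> Vector_Spaces.linear sc sc (\<lambda>x. f (as @ x # bs))"
    using h unfolding is_hom_op_def by blast+
  have A: "f (as @ (x + y) # bs) = f (as @ x # bs) + f (as @ y # bs) \<and> f (as @ sc c x # bs) = sc c (f (as @ x # bs))"
    for as bs x y c
  proof (cases "length as + length bs + 1 = p")
    case True
    have "module_hom sc sc (\<lambda>x. f (as @ x # bs))" using Lin[OF True] by (simp add: linear_iff_module_hom)
    thus ?thesis unfolding module_hom_iff by blast
  next
    case False
    hence "\<And>z. length (as @ z # bs) \<noteq> p" by simp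
    thus ?thesis using Z by simp
  qed
  show ?thesis unfolding mlin_def using A by blast
qed

lemma hom_par:
  assumes h: "is_hom_op sc G0 G1 p b f"
  shows "par b f"
  unfolding par_def
proof (intro allI impI)
  fix xs ps assume l: "list_all2 (\<lambda>x c. x \<in> gp c) xs ps"
  show "f xs \<in> gp (foldr (\<lambda>a c. a \<noteq> c) ps b)"
  proof (cases "length xs = p")
    case True
    have lp: "length ps = p" using l True by (simp add: list_all2_lengthD[symmetric])
    have "\<forall>i<p. xs ! i \<in> gp (ps ! i)" using l True by (auto dest: list_all2_nthD)
    thus ?thesis using h True lp unfolding is_hom_op_def by blast
  next
    case False
    hence "f xs = 0" using h unfolding is_hom_op_def by blast
    thus ?thesis by simp
  qed
qed

end

theorem proposition4p5:
  fixes sc :: "'k::field_char_0 \<Rightarrow> 'g::ab_group_add \<Rightarrow> 'g"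
    and G0 G1 :: "'g set" and brG :: "'g \<Rightarrow> 'g \<Rightarrow> 'g"
    and p q n :: nat and bA bB :: bool and f g :: "'g list \<Rightarrow> 'g"
  assumes "lie_superalgebra sc G0 G1 brG"
    and "is_hom_op sc G0 G1 p bA f"
    and "is_hom_op sc G0 G1 q bB g"
    and "n \<ge> 1"
  shows
    "(ad_one sc G0 G1 brG (p + q) (ext_br sc G0 G1 brG p q bB f g) n =
       (\<lambda>xs. \<Sum>k\<le>n. sc (of_nat (n choose k))
          (ext_br sc G0 G1 brG (p + k) (q + (n - k)) bB
             (ad_one sc G0 G1 brG p f k) (ad_one sc G0 G1 brG q g (n - k)) xs))) \<and>
    (dot_op sc G0 G1 (p + n) q bB (ad_one sc G0 G1 brG p f n) g =
       (\<lambda>xs. (\<Sum>i<n. ad_one sc G0 G1 brG (p + i + q)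
                 (ext_br sc G0 G1 brG (p + i) q bB (ad_one sc G0 G1 brG p f i) g) (n - 1 - i) xs)
             + ad_one sc G0 G1 brG (p + q - 1) (dot_op sc G0 G1 p q bB f g) n xs)) \<and>
    ((\<lambda>xs. (\<Sum>i<n. ad_one sc G0 G1 brG (p + i + q)
                 (ext_br sc G0 G1 brG (p + i) q bB (ad_one sc G0 G1 brG p f i) g) (n - 1 - i) xs)
             + ad_one sc G0 G1 brG (p + q - 1) (dot_op sc G0 G1 p q bB f g) n xs) =
       (\<lambda>xs. (\<Sum>i<n. sc (of_nat (n choose (n - i)))
                 (ext_br sc G0 G1 brG (p + i) (q + (n - 1 - i)) bB
                    (ad_one sc G0 G1 brG p f i) (ad_one sc G0 G1 brG q g (n - 1 - i)) xs))
             + ad_one sc G0 G1 brG (p + q - 1) (dot_op sc G0 G1 p q bB f g) n xs))"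
proof -
  interpret LS sc G0 G1 brG by unfold_locales (rule assms(1))
  have mf: "mlin f" by (rule hom_mlin[OF assms(2)])
  have mg: "mlin g" by (rule hom_mlin[OF assms(3)])
  have pg: "par bB g" by (rule hom_par[OF assms(3)])
  show ?thesis
  proof (intro conjI)
    show "ad (p + q) (E p q bB f g) n = (\<lambda>xs. \<Sum>k\<le>n. sc (of_nat (n choose k))
          (E (p + k) (q + (n - k)) bB (ad p f k) (ad q g (n - k)) xs))"
      by (rule C1[OF mg pg])
    show "dot (p + n) q bB (ad p f n) g = (\<lambda>xs. (\<Sum>i<n. ad (p + i + q)
                 (E (p + i) q bB (ad p f i) g) (n - 1 - i) xs) + ad (p + q - 1) (dot p q bB f g) n xs)"
      by (rule C2[OF mf mg pg])
    show "(\<lambda>xs. (\<Sum>i<n. ad (p + i + q) (E (p + i) q bB (ad p f i) g) (n - 1 - i) xs)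
             + ad (p + q - 1) (dot p q bB f g) n xs) =
       (\<lambda>xs. (\<Sum>i<n. sc (of_nat (n choose (n - i)))
                 (E (p + i) (q + (n - 1 - i)) bB (ad p f i) (ad q g (n - 1 - i)) xs))
             + ad (p + q - 1) (dot p q bB f g) n xs)"
      unfolding C3[OF mg pg] ..
  qed
qed

end
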